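(* Let $h\in\mathcal H$ and $d=\operatorname{hdepth}(h)$. Then for all integers $k,d'$ with $0\le k\le d'\le d$ we have $\beta_k^{d'}(h)\ge \beta_k^d(h)\ge 0$.
   Context: $\mathcal H$ denotes the set of nonzero functions $h:\mathbb Z\to\mathbb Z_{\ge 0}$ such that $h(j)=0$ for all sufficiently negative $j$. For $h\in\mathcal H$ and integers $k\le d$, set $\beta_k^d(h)=\sum_{j\le k}(-1)^{k-j}\binom{d-j}{k-j}h(j)$. The (arithmetic) Hilbert depth of $h$ is $\operatorname{hdepth}(h)=\max\{d\in\mathbb Z:\ \beta_k^d(h)\ge 0\text{ for all integers }k\le d\}$. *)

theory Defs
  imports Main
begin

definition in_H :: "(int \<Rightarrow> nat) \<Rightarrow> bool" where
  "in_H h \<longleftrightarrow> h \<noteq> (\<lambda>_. 0) \<and> (\<exists>m. \<forall>j<m. h j = 0)"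

text \<open>beta_k^d(h) = sum_{j<=k} (-1)^(k-j) binom(d-j, k-j) h(j), for k <= d.
  Only finitely many terms are nonzero when h is in H; the sum ranges over them.\<close>
definition beta :: "int \<Rightarrow> int \<Rightarrow> (int \<Rightarrow> nat) \<Rightarrow> int" where
  "beta k d h = (\<Sum>j\<in>{j. j \<le> k \<and> h j \<noteq> 0}.
      (-1) ^ nat (k - j) * int (nat (d - j) choose nat (k - j)) * int (h j))"

definition hdepth :: "(int \<Rightarrow> nat) \<Rightarrow> int" where
  "hdepth h = (GREATEST d. \<forall>k\<le>d. beta k d h \<ge> 0)"

end

theory Submission
  imports Defs
begin

lemma beta_interval:
  assumes m: "\<forall>j<m. h j = 0"
  shows "beta k d h = (\<Sum>j\<in>{m..k}.
      (-1) ^ nat (k - j) * int (nat (d - j) choose nat (k - j)) * int (h j))"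
  unfolding beta_def
proof (rule sum.mono_neutral_left)
  show "finite {m..k}" by simp
  show "{j. j \<le> k \<and> h j \<noteq> 0} \<subseteq> {m..k}" using m by (auto simp: not_less[symmetric])
  show "\<forall>i\<in>{m..k} - {j. j \<le> k \<and> h j \<noteq> 0}.
     (-1) ^ nat (k - i) * int (nat (d - i) choose nat (k - i)) * int (h i) = 0" by auto
qed

lemma term_step:
  fixes j k d :: int
  assumes "j \<le> k - 1" "k \<le> d"
  shows "(-1::int) ^ nat (k - j) * int (nat (d - j) choose nat (k - j)) * x =
     (-1) ^ nat (k - j) * int (nat (d + 1 - j) choose nat (k - j)) * x
     + (-1) ^ nat (k - 1 - j) * int (nat (d - j) choose nat (k - 1 - j)) * x"
proof -
  define a where "a = nat (d - j)"
  define b where "b = nat (k - 1 - j)"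
  have 1: "nat (d + 1 - j) = Suc a" using assms unfolding a_def by simp
  have 2: "nat (k - j) = Suc b" using assms unfolding b_def by simp
  have 3: "nat (d - j) = a" "nat (k - 1 - j) = b" unfolding a_def b_def by simp_all
  show ?thesis unfolding 1 2 3
    by (simp add: algebra_simps)
qed

lemma beta_step:
  assumes m: "\<forall>j<m. h j = 0" and kd: "k \<le> d"
  shows "beta k d h = beta k (d + 1) h + beta (k - 1) d h"
proof (cases "k < m")
  case True
  then show ?thesis using m by (simp add: beta_interval[OF m])
next
  case False
  have ins: "{m..k} = insert k {m..k-1}" using False by auto
  have eq: "\<And>j. j \<in> {m..k-1} \<Longrightarrow> (-1::int) ^ nat (k - j) * int (nat (d - j) choose nat (k - j)) * int (h j) =
     (-1) ^ nat (k - j) * int (nat (d + 1 - j) choose nat (k - j)) * int (h j)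
     + (-1) ^ nat (k - 1 - j) * int (nat (d - j) choose nat (k - 1 - j)) * int (h j)"
    using kd by (intro term_step) auto
  have fin: "finite {m..k-1}" "k \<notin> {m..k-1}" by auto
  have S: "(\<Sum>j\<in>{m..k-1}. (-1::int) ^ nat (k - j) * int (nat (d - j) choose nat (k - j)) * int (h j)) =
     (\<Sum>j\<in>{m..k-1}. (-1) ^ nat (k - j) * int (nat (d + 1 - j) choose nat (k - j)) * int (h j))
     + (\<Sum>j\<in>{m..k-1}. (-1) ^ nat (k - 1 - j) * int (nat (d - j) choose nat (k - 1 - j)) * int (h j))"
    by (subst sum.distrib[symmetric]) (rule sum.cong[OF refl eq])
  show ?thesis
    unfolding beta_interval[OF m, of k] beta_interval[OF m, of "k-1"] ins sum.insert[OF fin]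
    using kd S by simp
qed

lemma one_step:
  assumes m: "\<forall>j<m. h j = 0" and D: "\<forall>i\<le>D. 0 \<le> beta i D h"
  shows "k \<le> D - 1 \<Longrightarrow> beta k D h \<le> beta k (D - 1) h"
proof (cases "k < m")
  case True
  then show "beta k D h \<le> beta k (D - 1) h" using m by (simp add: beta_interval[OF m])
next
  case False
  then have "m - 1 \<le> k" by simp
  then show "k \<le> D - 1 \<Longrightarrow> beta k D h \<le> beta k (D - 1) h"
  proof (induction k rule: int_ge_induct)
    case base
    then show ?case by (simp add: beta_interval[OF m])
  next
    case (step i)
    have s: "beta (i+1) (D-1) h = beta (i+1) D h + beta i (D-1) h"
      using beta_step[OF m, of "i+1" "D-1"] step.prems by simp
    have "0 \<le> beta i D h" using D step.prems by simp
    moreover have "beta i D h \<le> beta i (D-1) h" using step.IH step.prems by simp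
    ultimately show ?case using s by simp
  qed
qed

lemma down:
  assumes m: "\<forall>j<m. h j = 0" and D: "\<forall>i\<le>d. 0 \<le> beta i d h"
  shows "(\<forall>i\<le>d - int n. 0 \<le> beta i (d - int n) h) \<and> (\<forall>i\<le>d - int n. beta i d h \<le> beta i (d - int n) h)"
proof (induction n)
  case 0
  then show ?case using D by simp
next
  case (Suc n)
  have a: "\<forall>i\<le>d - int n - 1. beta i (d - int n) h \<le> beta i (d - int n - 1) h"
    using one_step[OF m, of "d - int n"] Suc.IH by auto
  have e: "d - int (Suc n) = d - int n - 1" by simp
  show ?case unfolding e
  proof (intro conjI allI impI)
    fix i assume i: "i \<le> d - int n - 1"
    then have i2: "i \<le> d - int n" by simp
    have "beta i (d - int n) h \<le> beta i (d - int n - 1) h" using a i by blast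
    then show "0 \<le> beta i (d - int n - 1) h" "beta i d h \<le> beta i (d - int n - 1) h"
      using Suc.IH i2 by force+
  qed
qed

lemma hdepth_props:
  assumes "in_H h"
  shows "\<forall>i\<le>hdepth h. 0 \<le> beta i (hdepth h) h"
proof -
  obtain m0 where m0: "\<forall>j<m0. h j = 0" using assms unfolding in_H_def by auto
  obtain j0 where j0: "h j0 \<noteq> 0" using assms unfolding in_H_def by auto
  have j0m: "m0 \<le> j0" using m0 j0 by (meson not_less)
  define S where "S = {n::nat. h (m0 + int n) \<noteq> 0}"
  have "nat (j0 - m0) \<in> S" using j0 j0m unfolding S_def by simp
  define n where "n = (LEAST n. n \<in> S)"
  have nS: "n \<in> S" unfolding n_def by (rule LeastI) fact
  define m where "m = m0 + int n"
  have hm: "h m \<noteq> 0" using nS unfolding S_def m_def by simp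
  have m: "\<forall>j<m. h j = 0"
  proof (intro allI impI)
    fix j assume jm: "j < m"
    show "h j = 0"
    proof (cases "j < m0")
      case True then show ?thesis using m0 by simp
    next
      case False
      then have "nat (j - m0) < n" using jm unfolding m_def by simp
      then have "nat (j - m0) \<notin> S" unfolding n_def using not_less_Least by blast
      then show ?thesis using False unfolding S_def by simp
    qed
  qed
  define P where "P = (\<lambda>d. \<forall>k\<le>d. 0 \<le> beta k d h)"
  have P0: "P (m - 1)" unfolding P_def by (auto simp: beta_interval[OF m])
  have bound: "D \<le> m + int (h (m+1))" if "P D" for D
  proof (rule ccontr)
    assume "\<not> ?thesis"
    then have Dl: "m + int (h (m+1)) < D" by simp
    have "0 \<le> beta (m+1) D h" using that Dl unfolding P_def by simp
    moreover have "beta (m+1) D h = int (h (m+1)) - int (nat (D - m)) * int (h m)"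
    proof -
      have iv: "{m..m+1} = {m, m+1}" by auto
      show ?thesis unfolding beta_interval[OF m] iv using Dl by (simp add: algebra_simps)
    qed
    moreover have "int (nat (D - m)) * int (h m) \<ge> int (nat (D - m))"
      using hm mult_left_mono[of 1 "int (h m)" "int (nat (D - m))"] by simp
    moreover have "int (nat (D - m)) = D - m" using Dl by simp
    ultimately show False using Dl by linarith
  qed
  define T where "T = {d. P d \<and> m - 1 \<le> d \<and> d \<le> m + int (h (m+1))}"
  have fT: "finite T" unfolding T_def by (rule finite_subset[of _ "{m-1..m + int (h (m+1))}"]) auto
  have neT: "m - 1 \<in> T" unfolding T_def using P0 bound[OF P0] by simp
  have g: "hdepth h = Max T"
    unfolding hdepth_def P_def[symmetric]
  proof (rule Greatest_equality)
    show "P (Max T)" using Max_in[OF fT] neT unfolding T_def by blast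
    fix y assume "P y"
    then show "y \<le> Max T"
    proof (cases "m - 1 \<le> y")
      case True
      then have "y \<in> T" using \<open>P y\<close> bound unfolding T_def by auto
      then show ?thesis using fT by simp
    next
      case False
      then show ?thesis using Max_ge[OF fT neT] by simp
    qed
  qed
  have "Max T \<in> T" using Max_in[OF fT] neT by blast
  then show ?thesis unfolding g T_def P_def by blast
qed

theorem proposition1p3:
  fixes h :: "int \<Rightarrow> nat" and k d' :: int
  assumes "in_H h"
    and "0 \<le> k" and "k \<le> d'" and "d' \<le> hdepth h"
  shows "beta k d' h \<ge> beta k (hdepth h) h \<and> beta k (hdepth h) h \<ge> 0"
proof -
  obtain m where m: "\<forall>j<m. h j = 0" using assms(1) unfolding in_H_def by auto
  have D: "\<forall>i\<le>hdepth h. 0 \<le> beta i (hdepth h) h" using hdepth_props[OF assms(1)] .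
  have e: "d' = hdepth h - int (nat (hdepth h - d'))" using assms by simp
  have "beta k (hdepth h) h \<le> beta k d' h"
    using down[OF m D, of "nat (hdepth h - d')"] assms(3) e by metis
  moreover have "0 \<le> beta k (hdepth h) h" using D assms by simp
  ultimately show ?thesis by simp
qed

end
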